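(* Let $S,T,V$ be ordered trees and let $g\colon V\to T$ and $f\colon T\to S$ be rigid surjections. Let $x$ be a leaf of $S$ and let $y$ be the leaf of $T$ that is $f$-conjugate to $x$. Then \[ f_x\circ g_y=(f\circ g)_x. \]
   Context: A tree is a finite, non-empty poset $(T,\sqsubseteq_T)$ with a smallest element (root) in which the predecessors of each element form a chain (each element is its own predecessor); $v\wedge_T w$ is the largest common predecessor. An ordered tree has a fixed linear order on the immediate successors of each node, inducing the lexicographic linear order $\leq_T$: $v\leq_T w$ if $v\sqsubseteq_T w$, and for incomparable $v,w$, $v\leq_T w$ iff the immediate successor of $v\wedge_T w$ below $v$ precedes the one below $w$. A morphism preserves $\wedge$, is $\leq$-monotone and maps root to root; an embedding is an injective morphism. A function $f\colon T\to S$ is a rigid surjection if there is a morphism $e\colon S\to T$ (unique, called the injection of $f$) with $f\circ e={\rm id}_S$ and $e(f(w))\sqsubseteq_T w$ for all $w$. For $v\in T$, $T^v=\{w\in T\mid w\leq_T v\}$. A leaf is a $\sqsubseteq$-maximal node. For an embedding $i\colon S\to T$, a leaf $y$ of $T$ is $i$-conjugate to a leaf $x$ of $S$ if: (i) when $x$ is the $\leq_S$-largest leaf of $S$, $y$ is the $\leq_T$-largest leaf of $T$; (ii) otherwise, with $x'$ the $\leq_S$-smallest leaf with $x<_S x'$, $y$ is the $\leq_T$-largest leaf with $y<_T i(x')$ and $i(x)\wedge_T i(x')=y\wedge_T i(x')$. A leaf $y$ of $T$ is $f$-conjugate to the leaf $x$ of $S$ if it is $i$-conjugate to $x$ for $i$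 the injection of $f$, and then $f_x:=f\upharpoonright T^y$. Similarly $g_y=g\upharpoonright V^z$ with $z$ the leaf of $V$ that is $g$-conjugate to $y$, and $(f\circ g)_x$ is defined using the rigid surjection $f\circ g$. *)

theory Defs
  imports Main
begin

text \<open>An ordered tree: a node set, the tree order (sqsubseteq) and, for each node,
  a linear order on its immediate successors (the sibling order).\<close>

record 'a otree =
  nodes :: "'a set"
  tle   :: "'a \<Rightarrow> 'a \<Rightarrow> bool"
  sibl  :: "'a \<Rightarrow> 'a \<Rightarrow> bool"

definition tlt :: "'a otree \<Rightarrow> 'a \<Rightarrow> 'a \<Rightarrow> bool" where
  "tlt T v w \<longleftrightarrow> tle T v w \<and> v \<noteq> w"

definition is_tree :: "'a otree \<Rightarrow> bool" where
  "is_tree T \<longleftrightarrow> finite (nodes T) \<and> nodes T \<noteq> {} \<and>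
     (\<forall>v\<in>nodes T. tle T v v) \<and>
     (\<forall>v\<in>nodes T. \<forall>w\<in>nodes T. tle T v w \<and> tle T w v \<longrightarrow> v = w) \<and>
     (\<forall>u\<in>nodes T. \<forall>v\<in>nodes T. \<forall>w\<in>nodes T. tle T u v \<and> tle T v w \<longrightarrow> tle T u w) \<and>
     (\<exists>r\<in>nodes T. \<forall>w\<in>nodes T. tle T r w) \<and>
     (\<forall>v\<in>nodes T. \<forall>u\<in>nodes T. \<forall>w\<in>nodes T.
        tle T u v \<and> tle T w v \<longrightarrow> tle T u w \<or> tle T w u)"

definition immsucc :: "'a otree \<Rightarrow> 'a \<Rightarrow> 'a \<Rightarrow> bool" where
  "immsucc T v w \<longleftrightarrow> v \<in> nodes T \<and> w \<in> nodes T \<and> tlt T v w \<and>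
     \<not> (\<exists>u\<in>nodes T. tlt T v u \<and> tlt T u w)"

definition is_otree :: "'a otree \<Rightarrow> bool" where
  "is_otree T \<longleftrightarrow> is_tree T \<and>
     (\<forall>v\<in>nodes T.
        (\<forall>a. immsucc T v a \<longrightarrow> sibl T a a) \<and>
        (\<forall>a b. immsucc T v a \<and> immsucc T v b \<and> sibl T a b \<and> sibl T b a \<longrightarrow> a = b) \<and>
        (\<forall>a b c. immsucc T v a \<and> immsucc T v b \<and> immsucc T v c \<and> sibl T a b \<and> sibl T b c
            \<longrightarrow> sibl T a c) \<and>
        (\<forall>a b. immsucc T v a \<and> immsucc T v b \<longrightarrow> sibl T a b \<or> sibl T b a))"

definition root :: "'a otree \<Rightarrow> 'a" where
  "root T = (THE r. r \<in> nodes T \<and> (\<forall>w\<in>nodes T. tle T r w))"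

definition meet :: "'a otree \<Rightarrow> 'a \<Rightarrow> 'a \<Rightarrow> 'a" where
  "meet T v w = (THE m. m \<in> nodes T \<and> tle T m v \<and> tle T m w \<and>
       (\<forall>u\<in>nodes T. tle T u v \<and> tle T u w \<longrightarrow> tle T u m))"

definition child_toward :: "'a otree \<Rightarrow> 'a \<Rightarrow> 'a \<Rightarrow> 'a" where
  "child_toward T m v = (THE c. immsucc T m c \<and> tle T c v)"

definition lex :: "'a otree \<Rightarrow> 'a \<Rightarrow> 'a \<Rightarrow> bool" where
  "lex T v w \<longleftrightarrow> tle T v w \<or>
     (\<not> tle T v w \<and> \<not> tle T w v \<and>
      sibl T (child_toward T (meet T v w) v) (child_toward T (meet T v w) w))"

definition lexlt :: "'a otree \<Rightarrow> 'a \<Rightarrow> 'a \<Rightarrow> bool" where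
  "lexlt T v w \<longleftrightarrow> lex T v w \<and> v \<noteq> w"

definition morphism :: "'a otree \<Rightarrow> 'b otree \<Rightarrow> ('a \<Rightarrow> 'b) \<Rightarrow> bool" where
  "morphism S T e \<longleftrightarrow> (\<forall>v\<in>nodes S. e v \<in> nodes T) \<and>
     (\<forall>v\<in>nodes S. \<forall>w\<in>nodes S. e (meet S v w) = meet T (e v) (e w)) \<and>
     (\<forall>v\<in>nodes S. \<forall>w\<in>nodes S. lex S v w \<longrightarrow> lex T (e v) (e w)) \<and>
     e (root S) = root T"

definition embedding :: "'a otree \<Rightarrow> 'b otree \<Rightarrow> ('a \<Rightarrow> 'b) \<Rightarrow> bool" where
  "embedding S T e \<longleftrightarrow> morphism S T e \<and> inj_on e (nodes S)"

definition is_injection_of :: "'b otree \<Rightarrow> 'a otree \<Rightarrow> ('b \<Rightarrow> 'a) \<Rightarrow> ('a \<Rightarrow> 'b) \<Rightarrow> bool" where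
  "is_injection_of T S f e \<longleftrightarrow> morphism S T e \<and> (\<forall>v\<in>nodes S. f (e v) = v) \<and>
     (\<forall>w\<in>nodes T. tle T (e (f w)) w)"

definition rigid_surj :: "'b otree \<Rightarrow> 'a otree \<Rightarrow> ('b \<Rightarrow> 'a) \<Rightarrow> bool" where
  "rigid_surj T S f \<longleftrightarrow> (\<forall>w\<in>nodes T. f w \<in> nodes S) \<and> (\<exists>e. is_injection_of T S f e)"

text \<open>the (unique on nodes S) injection of f\<close>
definition injection :: "'b otree \<Rightarrow> 'a otree \<Rightarrow> ('b \<Rightarrow> 'a) \<Rightarrow> ('a \<Rightarrow> 'b)" where
  "injection T S f = (SOME e. is_injection_of T S f e)"

definition leaf :: "'a otree \<Rightarrow> 'a \<Rightarrow> bool" where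
  "leaf T y \<longleftrightarrow> y \<in> nodes T \<and> (\<forall>w\<in>nodes T. tle T y w \<longrightarrow> w = y)"

definition i_conj :: "'a otree \<Rightarrow> 'b otree \<Rightarrow> ('a \<Rightarrow> 'b) \<Rightarrow> 'b \<Rightarrow> 'a \<Rightarrow> bool" where
  "i_conj S T i y x \<longleftrightarrow> leaf T y \<and> leaf S x \<and>
    (if (\<forall>u. leaf S u \<longrightarrow> lex S u x)
     then (\<forall>u. leaf T u \<longrightarrow> lex T u y)
     else (let x' = (THE x'. leaf S x' \<and> lexlt S x x' \<and>
                       (\<forall>u. leaf S u \<and> lexlt S x u \<longrightarrow> lex S x' u)) in
           lexlt T y (i x') \<and> meet T (i x) (i x') = meet T y (i x') \<and>
           (\<forall>u. leaf T u \<and> lexlt T u (i x') \<and> meet T (i x) (i x') = meet T u (i x')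
                 \<longrightarrow> lex T u y)))"

definition f_conj :: "'b otree \<Rightarrow> 'a otree \<Rightarrow> ('b \<Rightarrow> 'a) \<Rightarrow> 'b \<Rightarrow> 'a \<Rightarrow> bool" where
  "f_conj T S f y x \<longleftrightarrow> i_conj S T (injection T S f) y x"

text \<open>T^v = {w. w \<le>_T v}; f_x is f restricted to T^y\<close>
definition down :: "'a otree \<Rightarrow> 'a \<Rightarrow> 'a set" where
  "down T v = {w \<in> nodes T. lex T w v}"

end

theory Submission
  imports Defs
begin

lemma finite_max_rel:
  assumes "finite A" "A \<noteq> {}" "\<forall>a\<in>A. \<forall>b\<in>A. R a b \<or> R b a"
    "\<forall>a\<in>A. \<forall>b\<in>A. \<forall>c\<in>A. R a b \<longrightarrow> R b c \<longrightarrow> R a c"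
  shows "\<exists>m\<in>A. \<forall>a\<in>A. R a m"
  using assms
proof (induction A rule: finite_ne_induct)
  case (singleton x) thus ?case by blast
next
  case (insert x F)
  have t: "\<forall>a\<in>F. \<forall>b\<in>F. R a b \<or> R b a" using insert.prems(1) by blast
  have tr: "\<forall>a\<in>F. \<forall>b\<in>F. \<forall>c\<in>F. R a b \<longrightarrow> R b c \<longrightarrow> R a c" using insert.prems(2) by blast
  obtain m where m: "m\<in>F" "\<forall>a\<in>F. R a m" using insert.IH[OF t tr] by blast
  show ?case
  proof (cases "R x m")
    case True thus ?thesis using m by auto
  next
    case False
    hence mx: "R m x" using insert.prems(1) m(1) by blast
    have xx: "R x x" using insert.prems(1) by blast
    have "\<forall>a\<in>insert x F. R a x"
    proof
      fix a assume a: "a \<in> insert x F"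
      show "R a x"
      proof (cases "a = x")
        case True thus ?thesis using xx by simp
      next
        case False
        hence "a \<in> F" using a by simp
        hence "R a m" using m by blast
        thus ?thesis using mx insert.prems(2) \<open>a\<in>F\<close> m(1) by blast
      qed
    qed
    thus ?thesis by blast
  qed
qed

lemma finite_maximal_rel:
  assumes "finite A" "A \<noteq> {}"
    "\<forall>a\<in>A. \<forall>b\<in>A. R a b \<longrightarrow> R b a \<longrightarrow> a = b"
    "\<forall>a\<in>A. \<forall>b\<in>A. \<forall>c\<in>A. R a b \<longrightarrow> R b c \<longrightarrow> R a c"
  shows "\<exists>m\<in>A. \<forall>a\<in>A. R m a \<longrightarrow> a = m"
  using assms
proof (induction A rule: finite_ne_induct)
  case (singleton x) thus ?case by blast
next
  case (insert x F)
  have t: "\<forall>a\<in>F. \<forall>b\<in>F. R a b \<longrightarrow> R b a \<longrightarrow> a = b" using insert.prems(1) by blast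
  have tr: "\<forall>a\<in>F. \<forall>b\<in>F. \<forall>c\<in>F. R a b \<longrightarrow> R b c \<longrightarrow> R a c" using insert.prems(2) by blast
  obtain m where m: "m\<in>F" "\<forall>a\<in>F. R m a \<longrightarrow> a = m" using insert.IH[OF t tr] by blast
  show ?case
  proof (cases "R m x")
    case False
    have "\<forall>a\<in>insert x F. R m a \<longrightarrow> a = m" using False m by auto
    thus ?thesis using m(1) by blast
  next
    case True
    have "\<forall>a\<in>insert x F. R x a \<longrightarrow> a = x"
    proof
      fix a assume a: "a \<in> insert x F"
      show "R x a \<longrightarrow> a = x"
      proof
        assume xa: "R x a"
        show "a = x"
        proof (cases "a = x")
          case False
          hence aF: "a \<in> F" using a by auto
          have "R m a" using insert.prems(2) True xa aF m(1) by blast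
          hence am: "a = m" using m aF by blast
          hence "R x m" using xa by simp
          hence "m = x" using insert.prems(1) True m(1) by blast
          thus ?thesis using am by simp
        qed simp
      qed
    qed
    thus ?thesis by blast
  qed
qed
locale tr =
  fixes T :: "'a otree"
  assumes tree: "is_tree T"
begin

lemma fin: "finite (nodes T)" using tree unfolding is_tree_def by blast
lemma t_refl: "v \<in> nodes T \<Longrightarrow> tle T v v" using tree unfolding is_tree_def by blast
lemma t_antisym: "\<lbrakk>v\<in>nodes T; w\<in>nodes T; tle T v w; tle T w v\<rbrakk> \<Longrightarrow> v = w"
  using tree unfolding is_tree_def by blast
lemma t_trans: "\<lbrakk>u\<in>nodes T; v\<in>nodes T; w\<in>nodes T; tle T u v; tle T v w\<rbrakk> \<Longrightarrow> tle T u w"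
  using tree unfolding is_tree_def by blast
lemma rootex: "\<exists>r\<in>nodes T. \<forall>w\<in>nodes T. tle T r w" using tree unfolding is_tree_def by blast
lemma t_chain: "\<lbrakk>v\<in>nodes T; u\<in>nodes T; w\<in>nodes T; tle T u v; tle T w v\<rbrakk> \<Longrightarrow> tle T u w \<or> tle T w u"
  using tree unfolding is_tree_def by blast

lemma meet_ex:
  assumes "u\<in>nodes T" "v\<in>nodes T"
  shows "\<exists>m\<in>nodes T. tle T m u \<and> tle T m v \<and> (\<forall>p\<in>nodes T. tle T p u \<and> tle T p v \<longrightarrow> tle T p m)"
proof -
  let ?A = "{p\<in>nodes T. tle T p u \<and> tle T p v}"
  obtain r where r: "r\<in>nodes T" "\<forall>w\<in>nodes T. tle T r w" using rootex by blast
  have "finite ?A" using fin by simp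
  moreover have "?A \<noteq> {}" using r assms by blast
  moreover have "\<forall>a\<in>?A. \<forall>b\<in>?A. tle T a b \<or> tle T b a" using t_chain assms by blast
  moreover have "\<forall>a\<in>?A. \<forall>b\<in>?A. \<forall>c\<in>?A. tle T a b \<longrightarrow> tle T b c \<longrightarrow> tle T a c" using t_trans by blast
  ultimately obtain m where "m\<in>?A" "\<forall>a\<in>?A. tle T a m" using finite_max_rel[of ?A "tle T"] by blast
  thus ?thesis by blast
qed

lemma meet_props:
  assumes "u\<in>nodes T" "v\<in>nodes T"
  shows "meet T u v \<in> nodes T" "tle T (meet T u v) u" "tle T (meet T u v) v"
    "\<And>p. p\<in>nodes T \<Longrightarrow> tle T p u \<Longrightarrow> tle T p v \<Longrightarrow> tle T p (meet T u v)"
proof -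
  obtain m where m: "m\<in>nodes T" "tle T m u" "tle T m v" "\<forall>p\<in>nodes T. tle T p u \<and> tle T p v \<longrightarrow> tle T p m"
    using meet_ex[OF assms] by blast
  have "meet T u v = m" unfolding meet_def
    by (rule the_equality) (use m t_antisym in blast)+
  thus "meet T u v \<in> nodes T" "tle T (meet T u v) u" "tle T (meet T u v) v"
    "\<And>p. p\<in>nodes T \<Longrightarrow> tle T p u \<Longrightarrow> tle T p v \<Longrightarrow> tle T p (meet T u v)" using m by auto
qed

lemma meet_eqI:
  assumes "u\<in>nodes T" "v\<in>nodes T" "m\<in>nodes T" "tle T m u" "tle T m v"
    "\<And>p. p\<in>nodes T \<Longrightarrow> tle T p u \<Longrightarrow> tle T p v \<Longrightarrow> tle T p m"
  shows "meet T u v = m"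
  using meet_props[OF assms(1,2)] assms t_antisym by blast

lemma meet_le_iff: "u\<in>nodes T \<Longrightarrow> v\<in>nodes T \<Longrightarrow> tle T u v \<longleftrightarrow> meet T u v = u"
  using meet_eqI[of u v u] meet_props[of u v] t_refl by metis

lemma imm_nodes: "immsucc T m a \<Longrightarrow> m\<in>nodes T \<and> a\<in>nodes T \<and> tle T m a \<and> m \<noteq> a"
  unfolding immsucc_def tlt_def by blast

lemma imm_L: "\<lbrakk>immsucc T m a; p\<in>nodes T; tlt T m p; tle T p a\<rbrakk> \<Longrightarrow> p = a"
  unfolding immsucc_def tlt_def by blast

lemma imm_uniq: "\<lbrakk>immsucc T m a; immsucc T m b; tle T a b\<rbrakk> \<Longrightarrow> a = b"
proof -
  assume h: "immsucc T m a" "immsucc T m b" "tle T a b"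
  have "a\<in>nodes T" "tlt T m a" using imm_nodes[OF h(1)] unfolding tlt_def by auto
  thus "a = b" using imm_L[OF h(2)] h(3) by blast
qed

lemma imm_below: "\<lbrakk>immsucc T m a; p\<in>nodes T; tle T p a; p \<noteq> a\<rbrakk> \<Longrightarrow> tle T p m"
proof -
  assume h: "immsucc T m a" "p\<in>nodes T" "tle T p a" "p \<noteq> a"
  note n = imm_nodes[OF h(1)]
  have "tle T p m \<or> tle T m p" using t_chain[of a p m] n h by blast
  moreover have "tle T m p \<Longrightarrow> p = m"
  proof (rule ccontr)
    assume "tle T m p" "p \<noteq> m"
    hence "tlt T m p" unfolding tlt_def by auto
    thus False using imm_L[OF h(1) h(2)] h by blast
  qed
  ultimately show "tle T p m" using t_refl h(2) by blast
qed

lemma child_under: "\<lbrakk>immsucc T m c; q\<in>nodes T; p\<in>nodes T; tlt T m q; tle T c p; tle T q p\<rbrakk> \<Longrightarrow> tle T c q"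
proof -
  assume h: "immsucc T m c" "q\<in>nodes T" "p\<in>nodes T" "tlt T m q" "tle T c p" "tle T q p"
  note n = imm_nodes[OF h(1)]
  have "tle T c q \<or> tle T q c" using t_chain[of p c q] n h by blast
  moreover have "tle T q c \<Longrightarrow> q = c" using imm_L[OF h(1) h(2) h(4)] by blast
  ultimately show ?thesis using t_refl h(2) by blast
qed

lemma imm_disj: "\<lbrakk>immsucc T m a; immsucc T m b; a\<noteq>b; p\<in>nodes T; tle T a p; tle T b p\<rbrakk> \<Longrightarrow> False"
proof -
  assume h: "immsucc T m a" "immsucc T m b" "a\<noteq>b" "p\<in>nodes T" "tle T a p" "tle T b p"
  have "tle T a b \<or> tle T b a" using t_chain[of p a b] imm_nodes[OF h(1)] imm_nodes[OF h(2)] h by blast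
  thus False using imm_uniq[OF h(1) h(2)] imm_uniq[OF h(2) h(1)] h(3) by blast
qed

lemma ct_ex:
  assumes "m\<in>nodes T" "v\<in>nodes T" "tlt T m v"
  shows "\<exists>c. immsucc T m c \<and> tle T c v"
proof -
  let ?A = "{p\<in>nodes T. tlt T m p \<and> tle T p v}"
  have "finite ?A" using fin by simp
  moreover have "?A \<noteq> {}" using assms t_refl by blast
  moreover have "\<forall>a\<in>?A. \<forall>b\<in>?A. tle T b a \<or> tle T a b" using t_chain assms by blast
  moreover have "\<forall>a\<in>?A. \<forall>b\<in>?A. \<forall>c\<in>?A. tle T b a \<longrightarrow> tle T c b \<longrightarrow> tle T c a" using t_trans by blast
  ultimately obtain c where c: "c\<in>?A" "\<forall>a\<in>?A. tle T c a" using finite_max_rel[of ?A "\<lambda>a b. tle T b a"] by blast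
  have "immsucc T m c" unfolding immsucc_def
  proof (intro conjI)
    show "\<not> (\<exists>u\<in>nodes T. tlt T m u \<and> tlt T u c)"
    proof
      assume "\<exists>u\<in>nodes T. tlt T m u \<and> tlt T u c"
      then obtain u where u: "u\<in>nodes T" "tlt T m u" "tlt T u c" by blast
      have "tle T u v" using u c t_trans assms unfolding tlt_def by blast
      hence "tle T c u" using c u by blast
      thus False using u c t_antisym unfolding tlt_def by blast
    qed
  qed (use c assms in auto)
  thus ?thesis using c by blast
qed

lemma ct_eq: "\<lbrakk>immsucc T m c; tle T c v; v\<in>nodes T\<rbrakk> \<Longrightarrow> child_toward T m v = c"
  unfolding child_toward_def
  by (rule the_equality) (use imm_disj in blast)+

lemma wit_meet:
  assumes "immsucc T m a" "immsucc T m b" "a \<noteq> b" "tle T a u" "tle T b v" "u\<in>nodes T" "v\<in>nodes T"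
  shows "meet T u v = m" "\<not> tle T u v" "\<not> tle T v u"
proof -
  have N: "m\<in>nodes T" "a\<in>nodes T" "b\<in>nodes T" "tle T m a" "tle T m b" using assms imm_nodes by blast+
  show nuv: "\<not> tle T u v"
  proof
    assume "tle T u v"
    hence "tle T a v" using t_trans[of a u v] assms N by blast
    thus False using imm_disj[OF assms(1,2,3), of v] assms by blast
  qed
  show "\<not> tle T v u"
  proof
    assume "tle T v u"
    hence "tle T b u" using t_trans[of b v u] assms N by blast
    thus False using imm_disj[OF assms(1,2,3), of u] assms by blast
  qed
  show "meet T u v = m"
  proof (rule meet_eqI)
    show "tle T m u" "tle T m v" using N assms t_trans by blast+
    fix p assume p: "p\<in>nodes T" "tle T p u" "tle T p v"
    have "tle T p a \<or> tle T a p" using t_chain[of u p a] p assms N by blast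
    moreover have "\<not> tle T a p"
    proof
      assume "tle T a p"
      hence "tle T a v" using t_trans[of a p v] p assms N by blast
      thus False using imm_disj[OF assms(1,2,3), of v] assms by blast
    qed
    ultimately show "tle T p m" using imm_below[of m a p] assms p by blast
  qed (use assms N in auto)
qed

definition lexw :: "'a \<Rightarrow> 'a \<Rightarrow> bool" where
  "lexw u v \<longleftrightarrow> tle T u v \<or> (\<exists>m a b. immsucc T m a \<and> immsucc T m b \<and> a \<noteq> b \<and> sibl T a b \<and> tle T a u \<and> tle T b v)"

lemma noncomp_wit:
  assumes "u\<in>nodes T" "v\<in>nodes T" "\<not> tle T u v" "\<not> tle T v u"
  obtains c d where "immsucc T (meet T u v) c" "immsucc T (meet T u v) d" "c \<noteq> d" "tle T c u" "tle T d v"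
    "child_toward T (meet T u v) u = c" "child_toward T (meet T u v) v = d"
proof -
  let ?m = "meet T u v"
  note mp = meet_props[OF assms(1,2)]
  have "tlt T ?m u" "tlt T ?m v" using mp assms unfolding tlt_def by metis+
  then obtain c d where cd: "immsucc T ?m c" "tle T c u" "immsucc T ?m d" "tle T d v"
    using ct_ex mp assms by meson
  have "c \<noteq> d"
  proof
    assume "c = d"
    hence "tle T c ?m" using mp cd imm_nodes by blast
    thus False using cd imm_nodes t_antisym mp by metis
  qed
  thus ?thesis using that cd ct_eq assms by blast
qed

lemma lex_iff: assumes "u\<in>nodes T" "v\<in>nodes T" shows "lex T u v \<longleftrightarrow> lexw u v"
proof
  assume "lex T u v"
  then consider "tle T u v" | "\<not> tle T u v" "\<not> tle T v u"
      "sibl T (child_toward T (meet T u v) u) (child_toward T (meet T u v) v)"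
    unfolding lex_def by blast
  thus "lexw u v"
  proof cases
    case 1 thus ?thesis unfolding lexw_def by blast
  next
    case 2
    obtain c d where "immsucc T (meet T u v) c" "immsucc T (meet T u v) d" "c \<noteq> d" "tle T c u" "tle T d v"
      "child_toward T (meet T u v) u = c" "child_toward T (meet T u v) v = d"
      using noncomp_wit[OF assms 2(1,2)] by blast
    thus ?thesis using 2 unfolding lexw_def by metis
  qed
next
  assume "lexw u v"
  then consider "tle T u v" | m a b where "immsucc T m a" "immsucc T m b" "a \<noteq> b" "sibl T a b" "tle T a u" "tle T b v"
    unfolding lexw_def by blast
  thus "lex T u v"
  proof cases
    case 1 thus ?thesis unfolding lex_def by blast
  next
    case 2
    note w = wit_meet[OF 2(1,2,3,5,6) assms]
    have "child_toward T m u = a" "child_toward T m v = b" using ct_eq 2 assms by blast+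
    thus ?thesis unfolding lex_def using w 2 by simp
  qed
qed

end

locale otr = tr +
  assumes ot: "is_otree T"
begin

lemma sib_total: "\<lbrakk>immsucc T m a; immsucc T m b\<rbrakk> \<Longrightarrow> sibl T a b \<or> sibl T b a"
  using ot imm_nodes unfolding is_otree_def by blast
lemma sib_antisym: "\<lbrakk>immsucc T m a; immsucc T m b; sibl T a b; sibl T b a\<rbrakk> \<Longrightarrow> a = b"
  using ot imm_nodes unfolding is_otree_def by blast
lemma sib_trans: "\<lbrakk>immsucc T m a; immsucc T m b; immsucc T m c; sibl T a b; sibl T b c\<rbrakk> \<Longrightarrow> sibl T a c"
  using ot imm_nodes unfolding is_otree_def by blast

lemma imm_eq_under: "\<lbrakk>immsucc T m a; immsucc T m b; p\<in>nodes T; tle T a p; tle T b p\<rbrakk> \<Longrightarrow> a = b"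
  using imm_disj by blast

lemma lexw_trans:
  assumes N: "u\<in>nodes T" "v\<in>nodes T" "w\<in>nodes T" and 1: "lexw u v" and 2: "lexw v w"
  shows "lexw u w"
proof -
  from 1 consider (a) "tle T u v" | (b) m a b where "immsucc T m a" "immsucc T m b" "a\<noteq>b" "sibl T a b" "tle T a u" "tle T b v"
    unfolding lexw_def by blast
  then show ?thesis
  proof cases
    case a
    from 2 consider (c) "tle T v w" | (d) n c d where "immsucc T n c" "immsucc T n d" "c\<noteq>d" "sibl T c d" "tle T c v" "tle T d w"
      unfolding lexw_def by blast
    then show ?thesis
    proof cases
      case c thus ?thesis using a t_trans N unfolding lexw_def by blast
    next
      case d
      note cn = imm_nodes[OF d(1)] and dn = imm_nodes[OF d(2)]
      have "tle T u c \<or> tle T c u" using t_chain[of v u c] N cn a d by blast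
      thus ?thesis
      proof
        assume "tle T c u" thus ?thesis using d unfolding lexw_def by blast
      next
        assume uc: "tle T u c"
        show ?thesis
        proof (cases "u = c")
          case True thus ?thesis using d t_refl N unfolding lexw_def by blast
        next
          case False
          hence "tle T u n" using imm_below[OF d(1) N(1) uc] by blast
          hence "tle T u w" using t_trans[of u n d] t_trans[of u d w] N cn dn d by blast
          thus ?thesis unfolding lexw_def by blast
        qed
      qed
    qed
  next
    case b
    note an = imm_nodes[OF b(1)] and bn = imm_nodes[OF b(2)]
    from 2 consider (c) "tle T v w" | (d) n c d where "immsucc T n c" "immsucc T n d" "c\<noteq>d" "sibl T c d" "tle T c v" "tle T d w"
      unfolding lexw_def by blast
    then show ?thesis
    proof cases
      case c
      have "tle T b w" using t_trans[of b v w] N bn b c by blast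
      thus ?thesis using b unfolding lexw_def by blast
    next
      case d
      note cn = imm_nodes[OF d(1)] and dn = imm_nodes[OF d(2)]
      have mv: "tle T m v" using t_trans[of m b v] bn b N by blast
      have nv: "tle T n v" using t_trans[of n c v] cn d N by blast
      have "tle T m n \<or> tle T n m" using t_chain[of v m n] mv nv N an cn by blast
      moreover
      { assume "m = n"
        hence bc: "b = c" using imm_eq_under[of m b c v] b d N by blast
        have sad: "sibl T a d" using sib_trans[OF b(1) b(2), of d] d b \<open>m = n\<close> bc by blast
        have "a \<noteq> d"
        proof
          assume "a = d"
          hence "sibl T b a" using d bc by simp
          thus False using sib_antisym[OF b(1) b(2) b(4)] b(3) by blast
        qed
        hence ?thesis using sad b d \<open>m = n\<close> unfolding lexw_def by blast }
      moreover
      { assume mn: "tle T m n" "m \<noteq> n"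
        hence "tlt T m n" unfolding tlt_def by simp
        hence "tle T b n" using child_under[OF b(2), of n v] N cn bn b mv nv by blast
        hence "tle T b w" using t_trans[of b n d] t_trans[of b d w] N cn dn bn d by blast
        hence ?thesis using b unfolding lexw_def by blast }
      moreover
      { assume nm: "tle T n m" "m \<noteq> n"
        hence "tlt T n m" unfolding tlt_def by auto
        hence "tle T c m" using child_under[OF d(1), of m v] N an cn d mv nv by blast
        hence "tle T c u" using t_trans[of c m a] t_trans[of c a u] N an cn b by blast
        hence ?thesis using d unfolding lexw_def by blast }
      ultimately show ?thesis by blast
    qed
  qed
qed

lemma lexw_antisym:
  assumes N: "u\<in>nodes T" "v\<in>nodes T" and 1: "lexw u v" and 2: "lexw v u"
  shows "u = v"
proof -
  from 1 consider (a) "tle T u v" | (b) m a b where "immsucc T m a" "immsucc T m b" "a\<noteq>b" "sibl T a b" "tle T a u" "tle T b v"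
    unfolding lexw_def by blast
  then show ?thesis
  proof cases
    case a
    from 2 consider (c) "tle T v u" | (d) n c d where "immsucc T n c" "immsucc T n d" "c\<noteq>d" "sibl T c d" "tle T c v" "tle T d u"
      unfolding lexw_def by blast
    then show ?thesis
    proof cases
      case c thus ?thesis using a t_antisym N by blast
    next
      case d
      have "tle T d v" using t_trans[of d u v] a d N imm_nodes[OF d(2)] by blast
      thus ?thesis using imm_disj[OF d(1,2,3) N(2) d(5)] by blast
    qed
  next
    case b
    note an = imm_nodes[OF b(1)] and bn = imm_nodes[OF b(2)]
    from 2 consider (c) "tle T v u" | (d) n c d where "immsucc T n c" "immsucc T n d" "c\<noteq>d" "sibl T c d" "tle T c v" "tle T d u"
      unfolding lexw_def by blast
    then show ?thesis
    proof cases
      case c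
      have "tle T b u" using t_trans[of b v u] c b N bn by blast
      thus ?thesis using imm_disj[OF b(1,2,3) N(1) b(5)] by blast
    next
      case d
      note cn = imm_nodes[OF d(1)] and dn = imm_nodes[OF d(2)]
      have mu: "tle T m u" using t_trans[of m a u] an b N by blast
      have nu: "tle T n u" using t_trans[of n d u] dn d N by blast
      have mv: "tle T m v" using t_trans[of m b v] bn b N by blast
      have nv: "tle T n v" using t_trans[of n c v] cn d N by blast
      have "tle T m n \<or> tle T n m" using t_chain[of u m n] mu nu N an dn by blast
      moreover
      { assume "m = n"
        hence "a = d" using imm_eq_under[of m a d u] b d N by blast
        moreover have "b = c" using imm_eq_under[of m b c v] b d N \<open>m = n\<close> by blast
        ultimately have False using sib_antisym[OF b(1) b(2) b(4)] b(3) d(4) by blast }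
      moreover
      { assume mn: "tle T m n" "m \<noteq> n"
        hence "tlt T m n" unfolding tlt_def by simp
        hence "tle T b n" using child_under[OF b(2), of n v] N cn bn b mv nv by blast
        hence "tle T b u" using t_trans[of b n d] t_trans[of b d u] N cn dn bn d by blast
        hence False using imm_disj[OF b(1,2,3) N(1) b(5)] by blast }
      moreover
      { assume nm: "tle T n m" "m \<noteq> n"
        hence "tlt T n m" unfolding tlt_def by auto
        hence "tle T c m" using child_under[OF d(1), of m v] N an cn d mv nv by blast
        hence "tle T c u" using t_trans[of c m a] t_trans[of c a u] N an cn b by blast
        hence False using imm_disj[OF d(1,2,3) N(1) _ d(6)] by blast }
      ultimately show ?thesis by blast
    qed
  qed
qed

lemma lexw_total:
  assumes N: "u\<in>nodes T" "v\<in>nodes T"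
  shows "lexw u v \<or> lexw v u"
proof (cases "tle T u v \<or> tle T v u")
  case True thus ?thesis unfolding lexw_def by blast
next
  case False
  then obtain c d where cd: "immsucc T (meet T u v) c" "immsucc T (meet T u v) d" "c \<noteq> d" "tle T c u" "tle T d v"
    using noncomp_wit[OF N] by blast
  have "sibl T c d \<or> sibl T d c" using sib_total cd by blast
  thus ?thesis using cd unfolding lexw_def by blast
qed

lemma lex_refl: "u\<in>nodes T \<Longrightarrow> lex T u u" unfolding lex_def using t_refl by blast
lemma le_lex: "tle T u v \<Longrightarrow> lex T u v" unfolding lex_def by blast
lemma lex_trans: "\<lbrakk>u\<in>nodes T; v\<in>nodes T; w\<in>nodes T; lex T u v; lex T v w\<rbrakk> \<Longrightarrow> lex T u w"
  using lex_iff lexw_trans by blast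
lemma lex_antisym: "\<lbrakk>u\<in>nodes T; v\<in>nodes T; lex T u v; lex T v u\<rbrakk> \<Longrightarrow> u = v"
  using lex_iff lexw_antisym by blast
lemma lex_total: "\<lbrakk>u\<in>nodes T; v\<in>nodes T\<rbrakk> \<Longrightarrow> lex T u v \<or> lex T v u"
  using lex_iff lexw_total by blast

lemma wit_lex:
  assumes "immsucc T m a" "immsucc T m b" "a \<noteq> b" "sibl T a b" "tle T a u" "tle T b v" "u\<in>nodes T" "v\<in>nodes T"
  shows "lexlt T u v"
proof -
  have "lex T u v" using lex_iff assms unfolding lexw_def by blast
  moreover have "u \<noteq> v" using wit_meet[OF assms(1,2,3,5,6,7,8)] t_refl assms by blast
  ultimately show ?thesis unfolding lexlt_def by blast
qed

lemma leaf_above: assumes "v\<in>nodes T" shows "\<exists>l. leaf T l \<and> tle T v l"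
proof -
  let ?A = "{w\<in>nodes T. tle T v w}"
  have "finite ?A" using fin by simp
  moreover have "?A \<noteq> {}" using assms t_refl by blast
  moreover have "\<forall>a\<in>?A. \<forall>b\<in>?A. tle T a b \<longrightarrow> tle T b a \<longrightarrow> a = b" using t_antisym by blast
  moreover have "\<forall>a\<in>?A. \<forall>b\<in>?A. \<forall>c\<in>?A. tle T a b \<longrightarrow> tle T b c \<longrightarrow> tle T a c" using t_trans by blast
  ultimately obtain m where m: "m\<in>?A" "\<forall>a\<in>?A. tle T m a \<longrightarrow> a = m"
    using finite_maximal_rel[of ?A "tle T"] by blast
  have "leaf T m" unfolding leaf_def
  proof (intro conjI ballI impI)
    show "m \<in> nodes T" using m by blast
    fix w assume w: "w\<in>nodes T" "tle T m w"
    hence "tle T v w" using t_trans[of v m w] m assms by blast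
    thus "w = m" using m w by blast
  qed
  thus ?thesis using m by blast
qed

lemma leaf_node: "leaf T l \<Longrightarrow> l \<in> nodes T" unfolding leaf_def by blast
lemma leaf_le: "\<lbrakk>leaf T l; w\<in>nodes T; tle T l w\<rbrakk> \<Longrightarrow> w = l" unfolding leaf_def by blast

lemma leaves_fin: "finite {l. leaf T l}"
  using fin leaf_node by (metis mem_Collect_eq rev_finite_subset subsetI)

lemma lex_max_ex: assumes "finite A" "A \<noteq> {}" "A \<subseteq> nodes T" shows "\<exists>m\<in>A. \<forall>a\<in>A. lex T a m"
  using finite_max_rel[of A "lex T"] assms lex_total lex_trans by (smt (verit, ccfv_threshold) subsetD)

lemma lex_min_ex: assumes "finite A" "A \<noteq> {}" "A \<subseteq> nodes T" shows "\<exists>m\<in>A. \<forall>a\<in>A. lex T m a"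
proof -
  have "\<forall>a\<in>A. \<forall>b\<in>A. lex T b a \<or> lex T a b" using assms lex_total by blast
  moreover have "\<forall>a\<in>A. \<forall>b\<in>A. \<forall>c\<in>A. lex T b a \<longrightarrow> lex T c b \<longrightarrow> lex T c a"
    using assms lex_trans by (meson subsetD)
  ultimately show ?thesis using finite_max_rel[of A "\<lambda>a b. lex T b a"] assms by blast
qed

end

lemma morph_tle:
  assumes "tr S" "tr T" "morphism S T e" "v\<in>nodes S" "w\<in>nodes S" "tle S v w"
  shows "tle T (e v) (e w)"
proof -
  interpret S: tr S by fact
  interpret T: tr T by fact
  have "meet S v w = v" using S.meet_le_iff assms by blast
  hence "e v = meet T (e v) (e w)" using assms unfolding morphism_def by metis
  moreover have "e v \<in> nodes T" "e w \<in> nodes T" using assms unfolding morphism_def by blast+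
  ultimately show ?thesis using T.meet_le_iff by metis
qed

lemma inj_props:
  assumes "is_injection_of T S f i"
  shows "\<And>v. v\<in>nodes S \<Longrightarrow> i v \<in> nodes T"
    "\<And>v. v\<in>nodes S \<Longrightarrow> f (i v) = v"
    "\<And>v w. v\<in>nodes S \<Longrightarrow> w\<in>nodes S \<Longrightarrow> i (meet S v w) = meet T (i v) (i w)"
    "\<And>v w. v\<in>nodes S \<Longrightarrow> w\<in>nodes S \<Longrightarrow> lex S v w \<Longrightarrow> lex T (i v) (i w)"
    "\<And>w. w\<in>nodes T \<Longrightarrow> tle T (i (f w)) w"
    "\<And>v w. v\<in>nodes S \<Longrightarrow> w\<in>nodes S \<Longrightarrow> i v = i w \<Longrightarrow> v = w"
    "morphism S T i"
  using assms unfolding is_injection_of_def morphism_def by metis+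

lemma inj_tle:
  assumes "tr S" "tr T" "is_injection_of T S f i" "v\<in>nodes S" "w\<in>nodes S" "tle S v w"
  shows "tle T (i v) (i w)"
  using morph_tle[OF assms(1,2) inj_props(7)[OF assms(3)] assms(4-6)] .

lemma inj_uniq:
  assumes "tr T" "is_injection_of T S f e" "is_injection_of T S f e'" "v\<in>nodes S"
  shows "e v = e' v"
proof -
  interpret T: tr T by fact
  note a = inj_props[OF assms(2)] and b = inj_props[OF assms(3)]
  have "tle T (e (f (e' v))) (e' v)" using a(5) b(1) assms(4) by blast
  hence 1: "tle T (e v) (e' v)" using b(2) assms(4) by simp
  have "tle T (e' (f (e v))) (e v)" using b(5) a(1) assms(4) by blast
  hence 2: "tle T (e' v) (e v)" using a(2) assms(4) by simp
  show ?thesis using T.t_antisym[OF a(1) b(1) 1 2] assms(4) by blast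
qed

definition nextleaf :: "'a otree \<Rightarrow> 'a \<Rightarrow> 'a \<Rightarrow> bool" where
  "nextleaf S x x' \<longleftrightarrow> leaf S x' \<and> lexlt S x x' \<and> (\<forall>u. leaf S u \<and> lexlt S x u \<longrightarrow> lex S x' u)"

definition maxleaf :: "'a otree \<Rightarrow> 'a \<Rightarrow> bool" where
  "maxleaf S x \<longleftrightarrow> (\<forall>u. leaf S u \<longrightarrow> lex S u x)"

lemma conj_max: "maxleaf S x \<Longrightarrow> i_conj S T i y x \<longleftrightarrow> leaf T y \<and> leaf S x \<and> maxleaf T y"
  unfolding i_conj_def maxleaf_def by simp

lemma nextleaf_uniq: assumes "otr S" "nextleaf S x a" "nextleaf S x b" shows "a = b"
proof -
  interpret S: otr S by fact
  show ?thesis using assms(2,3) S.lex_antisym S.leaf_node unfolding nextleaf_def by blast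
qed

lemma nextleaf_notmax: assumes "otr S" "leaf S x" "nextleaf S x x'" shows "\<not> maxleaf S x"
proof -
  interpret S: otr S by fact
  show ?thesis using assms S.lex_antisym S.leaf_node unfolding nextleaf_def maxleaf_def lexlt_def by blast
qed

lemma conj_next:
  assumes "otr S" "leaf S x" "nextleaf S x x'"
  shows "i_conj S T i y x \<longleftrightarrow> leaf T y \<and> lexlt T y (i x') \<and> meet T (i x) (i x') = meet T y (i x') \<and>
     (\<forall>u. leaf T u \<and> lexlt T u (i x') \<and> meet T (i x) (i x') = meet T u (i x') \<longrightarrow> lex T u y)"
proof -
  have nm: "\<not> (\<forall>u. leaf S u \<longrightarrow> lex S u x)" using nextleaf_notmax[OF assms] unfolding maxleaf_def .
  have th: "(THE x'. leaf S x' \<and> lexlt S x x' \<and> (\<forall>u. leaf S u \<and> lexlt S x u \<longrightarrow> lex S x' u)) = x'"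
    apply (rule the_equality)
    using assms(3) apply (simp add: nextleaf_def)
    using nextleaf_uniq[OF assms(1) assms(3)] unfolding nextleaf_def by blast
  show ?thesis unfolding i_conj_def if_not_P[OF nm] Let_def th using assms(2) by simp
qed

lemma nextleaf_ex:
  assumes "otr S" "leaf S x" "\<not> maxleaf S x"
  shows "\<exists>x'. nextleaf S x x'"
proof -
  interpret S: otr S by fact
  let ?A = "{u. leaf S u \<and> lexlt S x u}"
  obtain u where u: "leaf S u" "\<not> lex S u x" using assms(3) unfolding maxleaf_def by blast
  have "lex S x u" using S.lex_total u assms S.leaf_node by blast
  moreover have "x \<noteq> u" using u S.lex_refl S.leaf_node by blast
  ultimately have "u \<in> ?A" using u unfolding lexlt_def by blast
  moreover have "finite ?A" using S.leaves_fin by (rule rev_finite_subset) blast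
  moreover have "?A \<subseteq> nodes S" using S.leaf_node by blast
  ultimately obtain m where "m\<in>?A" "\<forall>a\<in>?A. lex S m a" using S.lex_min_ex[of ?A] by blast
  thus ?thesis unfolding nextleaf_def by blast
qed

lemma maxleaf_ex: assumes "otr T" shows "\<exists>y. leaf T y \<and> maxleaf T y"
proof -
  interpret T: otr T by fact
  obtain r where "r \<in> nodes T" using T.rootex by blast
  then obtain l where "leaf T l" using T.leaf_above by blast
  moreover have "finite {l. leaf T l}" by (rule T.leaves_fin)
  moreover have "{l. leaf T l} \<subseteq> nodes T" using T.leaf_node by blast
  ultimately obtain m where "m\<in>{l. leaf T l}" "\<forall>a\<in>{l. leaf T l}. lex T a m"
    using T.lex_max_ex[of "{l. leaf T l}"] by blast
  thus ?thesis unfolding maxleaf_def by blast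
qed

lemma maxleaf_all: assumes "otr T" "leaf T y" "maxleaf T y" "v\<in>nodes T" shows "lex T v y"
proof -
  interpret T: otr T by fact
  obtain l where l: "leaf T l" "tle T v l" using T.leaf_above assms by blast
  have "lex T l y" using assms l unfolding maxleaf_def by blast
  thus ?thesis using T.lex_trans[of v l y] T.le_lex[OF l(2)] l assms T.leaf_node by blast
qed

context otr begin
lemma set_char:
  assumes "leaf T u" "p\<in>nodes T" "n\<in>nodes T" "tlt T n p" "immsucc T n B" "tle T B p"
  shows "(lexlt T u p \<and> meet T u p = n) \<longleftrightarrow> (\<exists>\<alpha>. immsucc T n \<alpha> \<and> \<alpha> \<noteq> B \<and> sibl T \<alpha> B \<and> tle T \<alpha> u)"
proof
  have uN: "u \<in> nodes T" using assms(1) leaf_node by blast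
  assume h: "lexlt T u p \<and> meet T u p = n"
  have n1: "\<not> tle T u p" using leaf_le[OF assms(1) assms(2)] h unfolding lexlt_def by blast
  have n2: "\<not> tle T p u"
  proof
    assume pu: "tle T p u"
    have "meet T u p = p" using meet_eqI[OF uN assms(2) assms(2) pu t_refl[OF assms(2)]] by blast
    thus False using h assms(4) unfolding tlt_def by simp
  qed
  have "lexw u p" using lex_iff[OF uN assms(2)] h unfolding lexlt_def by blast
  then obtain m a b where w: "immsucc T m a" "immsucc T m b" "a \<noteq> b" "sibl T a b" "tle T a u" "tle T b p"
    using n1 unfolding lexw_def by blast
  have "m = n" using wit_meet(1)[OF w(1,2,3,5,6) uN assms(2)] h by simp
  hence "b = B" using imm_eq_under[of n b B p] w assms by blast
  thus "\<exists>\<alpha>. immsucc T n \<alpha> \<and> \<alpha> \<noteq> B \<and> sibl T \<alpha> B \<and> tle T \<alpha> u" using w \<open>m = n\<close> by blast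
next
  have uN: "u \<in> nodes T" using assms(1) leaf_node by blast
  assume "\<exists>\<alpha>. immsucc T n \<alpha> \<and> \<alpha> \<noteq> B \<and> sibl T \<alpha> B \<and> tle T \<alpha> u"
  then obtain \<alpha> where a: "immsucc T n \<alpha>" "\<alpha> \<noteq> B" "sibl T \<alpha> B" "tle T \<alpha> u" by blast
  show "lexlt T u p \<and> meet T u p = n"
    using wit_lex[OF a(1) assms(5) a(2,3,4) assms(6) uN assms(2)] wit_meet(1)[OF a(1) assms(5) a(2,4) assms(6) uN assms(2)]
    by blast
qed
end

lemma inj_incomp:
  assumes "otr S" "otr T" "is_injection_of T S f i" "leaf S x" "leaf S x'" "x \<noteq> x'"
  shows "\<not> tle T (i x) (i x')"
proof
  interpret S: otr S by fact
  interpret T: otr T by fact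
  note ip = inj_props[OF assms(3)]
  have xN: "x \<in> nodes S" "x' \<in> nodes S" using assms S.leaf_node by blast+
  assume "tle T (i x) (i x')"
  hence "meet T (i x) (i x') = i x" using T.meet_le_iff ip(1) xN by blast
  hence "i (meet S x x') = i x" using ip(3) xN by simp
  hence "meet S x x' = x" using ip(6) S.meet_props(1) xN by blast
  hence "tle S x x'" using S.meet_le_iff xN by blast
  thus False using S.leaf_le[OF assms(4) xN(2)] assms(6) by simp
qed

lemma conj_ex:
  assumes "otr S" "otr T" "is_injection_of T S f i" "leaf S x"
  shows "\<exists>y. i_conj S T i y x"
proof (cases "maxleaf S x")
  case True
  obtain y where "leaf T y" "maxleaf T y" using maxleaf_ex[OF assms(2)] by blast
  hence "i_conj S T i y x" using conj_max[OF True, of T i y, THEN iffD2] assms(4) by blast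
  thus ?thesis by blast
next
  case False
  interpret S: otr S by fact
  interpret T: otr T by fact
  note ip = inj_props[OF assms(3)]
  obtain x' where x': "nextleaf S x x'" using nextleaf_ex[OF assms(1,4) False] by blast
  have xN: "x \<in> nodes S" "x' \<in> nodes S" "leaf S x'" using assms x' S.leaf_node unfolding nextleaf_def by blast+
  have xx: "x \<noteq> x'" "lex S x x'" using x' unfolding nextleaf_def lexlt_def by blast+
  let ?a = "i x" and ?b = "i x'"
  have abN: "?a \<in> nodes T" "?b \<in> nodes T" using ip(1) xN by blast+
  have lab: "lex T ?a ?b" using ip(4) xN xx by blast
  have i1: "\<not> tle T ?a ?b" using inj_incomp[OF assms(1,2,3,4) xN(3) xx(1)] .
  have i2: "\<not> tle T ?b ?a" using inj_incomp[OF assms(1,2,3) xN(3) assms(4) not_sym[OF xx(1)]] .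
  obtain m \<alpha> \<gamma> where w: "immsucc T m \<alpha>" "immsucc T m \<gamma>" "\<alpha> \<noteq> \<gamma>" "sibl T \<alpha> \<gamma>" "tle T \<alpha> ?a" "tle T \<gamma> ?b"
    using T.lex_iff[OF abN] lab i1 unfolding T.lexw_def by blast
  have mab: "meet T ?a ?b = m" using T.wit_meet(1)[OF w(1,2,3,5,6) abN] .
  obtain l where l: "leaf T l" "tle T ?a l" using T.leaf_above abN by blast
  have lN: "l \<in> nodes T" using l T.leaf_node by blast
  have al: "tle T \<alpha> l" using T.t_trans[of \<alpha> ?a l] w l abN lN T.imm_nodes by blast
  let ?C = "{u. leaf T u \<and> lexlt T u ?b \<and> meet T ?a ?b = meet T u ?b}"
  have "lexlt T l ?b" using T.wit_lex[OF w(1,2,3,4) al w(6) lN abN(2)] .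
  moreover have "meet T l ?b = m" using T.wit_meet(1)[OF w(1,2,3) al w(6) lN abN(2)] .
  ultimately have "l \<in> ?C" using l mab by simp
  moreover have "finite ?C" using T.leaves_fin by (rule rev_finite_subset) blast
  moreover have "?C \<subseteq> nodes T" using T.leaf_node by blast
  ultimately obtain y where y: "y \<in> ?C" "\<forall>u\<in>?C. lex T u y" using T.lex_max_ex[of ?C] by blast
  have "i_conj S T i y x" apply (rule conj_next[OF assms(1,4) x', THEN iffD2]) using y by blast
  thus ?thesis by blast
qed

lemma otr_of: "is_otree T \<Longrightarrow> otr T"
  unfolding otr_def otr_axioms_def tr_def is_otree_def by blast

lemma inj_of: "rigid_surj T S f \<Longrightarrow> is_injection_of T S f (injection T S f)"
  unfolding rigid_surj_def injection_def using someI_ex[of "is_injection_of T S f"] by blast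

theorem lemma4p15:
  fixes S :: "'a otree" and T :: "'b otree" and V :: "'c otree"
    and f :: "'b \<Rightarrow> 'a" and g :: "'c \<Rightarrow> 'b" and x :: 'a and y :: 'b
  assumes "is_otree S" and "is_otree T" and "is_otree V"
    and "rigid_surj V T g" and "rigid_surj T S f"
    and "leaf S x" and "f_conj T S f y x"
  shows "(\<exists>z. f_conj V T g z y) \<and> (\<exists>z'. f_conj V S (f \<circ> g) z' x) \<and>
    (\<forall>z z'. f_conj V T g z y \<longrightarrow> f_conj V S (f \<circ> g) z' x \<longrightarrow>
       down V z = down V z' \<and> g ` down V z \<subseteq> down T y \<and>
       (\<forall>w\<in>down V z. f (g w) = (f \<circ> g) w))"
proof -
  have oS: "otr S" and oT: "otr T" and oV: "otr V" using otr_of assms(1,2,3) by blast+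
  interpret S: otr S by (rule oS)
  interpret T: otr T by (rule oT)
  interpret V: otr V by (rule oV)
  define F where "F = injection T S f"
  define G where "G = injection V T g"
  define H where "H = injection V S (f \<circ> g)"
  have iF: "is_injection_of T S f F" unfolding F_def by (rule inj_of[OF assms(5)])
  have iG: "is_injection_of V T g G" unfolding G_def by (rule inj_of[OF assms(4)])
  note pF = inj_props[OF iF] and pG = inj_props[OF iG]
  have gN: "\<And>w. w\<in>nodes V \<Longrightarrow> g w \<in> nodes T" using assms(4) unfolding rigid_surj_def by blast
  have fN: "\<And>w. w\<in>nodes T \<Longrightarrow> f w \<in> nodes S" using assms(5) unfolding rigid_surj_def by blast
  have iGF: "is_injection_of V S (f \<circ> g) (G \<circ> F)"
    unfolding is_injection_of_def
  proof (intro conjI ballI)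
    show "morphism S V (G \<circ> F)" unfolding morphism_def
    proof (intro conjI ballI impI)
      fix v assume "v \<in> nodes S" thus "(G \<circ> F) v \<in> nodes V" using pF(1) pG(1) by simp
    next
      fix v w assume "v \<in> nodes S" "w \<in> nodes S"
      thus "(G \<circ> F) (meet S v w) = meet V ((G \<circ> F) v) ((G \<circ> F) w)" using pF(1,3) pG(3) by simp
    next
      fix v w assume "v \<in> nodes S" "w \<in> nodes S" "lex S v w"
      thus "lex V ((G \<circ> F) v) ((G \<circ> F) w)" using pF(1,4) pG(4) by simp
    next
      show "(G \<circ> F) (root S) = root V" using pF(7) pG(7) unfolding morphism_def by simp
    qed
  next
    fix v assume "v \<in> nodes S" thus "(f \<circ> g) ((G \<circ> F) v) = v" using pF(1,2) pG(2) by simp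
  next
    fix w assume w: "w \<in> nodes V"
    have a: "tle T (F (f (g w))) (g w)" using pF(5) gN w by blast
    have b: "tle V (G (F (f (g w)))) (G (g w))"
      using inj_tle[OF T.tr_axioms V.tr_axioms iG pF(1) gN a] fN gN w by blast
    have c: "tle V (G (g w)) w" using pG(5) w by blast
    show "tle V ((G \<circ> F) ((f \<circ> g) w)) w"
      using V.t_trans[OF _ _ w b c] pG(1) pF(1) fN gN w by simp
  qed
  have rH: "rigid_surj V S (f \<circ> g)" unfolding rigid_surj_def using iGF fN gN by auto
  have iH: "is_injection_of V S (f \<circ> g) H" unfolding H_def by (rule inj_of[OF rH])
  have eqH: "\<And>v. v \<in> nodes S \<Longrightarrow> H v = G (F v)"
    using inj_uniq[OF V.tr_axioms iH iGF] by simp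
  have cy: "i_conj S T F y x" using assms(7) unfolding f_conj_def F_def .
  have yleaf: "leaf T y" using cy unfolding i_conj_def by blast
  have yN: "y \<in> nodes T" using yleaf T.leaf_node by blast
  have P1: "\<exists>z. f_conj V T g z y" unfolding f_conj_def using conj_ex[OF oT oV iG yleaf] G_def by simp
  have P2: "\<exists>z'. f_conj V S (f \<circ> g) z' x" unfolding f_conj_def using conj_ex[OF oS oV iH assms(6)] H_def by simp
  have P3: "z = z' \<and> (\<forall>w\<in>nodes V. lex V w z \<longrightarrow> lex T (g w) y)"
    if hz0: "f_conj V T g z y" and hz0': "f_conj V S (f \<circ> g) z' x" for z z'
  proof -
    have hz: "i_conj T V G z y" using hz0 unfolding f_conj_def G_def .
    have hz': "i_conj S V H z' x" using hz0' unfolding f_conj_def H_def .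
    show ?thesis
    proof (cases "maxleaf S x")
      case True
      have ymax: "maxleaf T y" using conj_max[OF True, of T F y, THEN iffD1] cy by blast
      have z: "leaf V z" "maxleaf V z" using conj_max[OF ymax, of V G z, THEN iffD1] hz by blast+
      have z': "leaf V z'" "maxleaf V z'" using conj_max[OF True, of V H z', THEN iffD1] hz' by blast+
      have "lex V z z'" using z z' unfolding maxleaf_def by blast
      moreover have "lex V z' z" using z z' unfolding maxleaf_def by blast
      ultimately have "z = z'" using V.lex_antisym V.leaf_node z z' by blast
      moreover have "\<forall>w\<in>nodes V. lex V w z \<longrightarrow> lex T (g w) y"
        using maxleaf_all[OF oT yleaf ymax] gN by blast
      ultimately show ?thesis by blast
    next
      case False
      obtain x' where x': "nextleaf S x x'" using nextleaf_ex[OF oS assms(6) False] by blast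
      have hy: "leaf T y" "lexlt T y (F x')" "meet T (F x) (F x') = meet T y (F x')"
        "\<forall>u. leaf T u \<and> lexlt T u (F x') \<and> meet T (F x) (F x') = meet T u (F x') \<longrightarrow> lex T u y"
        using conj_next[OF oS assms(6) x', of T F y, THEN iffD1, OF cy] by blast+
      have xN: "x \<in> nodes S" "x' \<in> nodes S" "leaf S x'" using assms(6) x' S.leaf_node unfolding nextleaf_def by blast+
      have xx: "x \<noteq> x'" "lex S x x'" using x' unfolding nextleaf_def lexlt_def by blast+
      define a where "a = F x"
      define b where "b = F x'"
      have abN: "a \<in> nodes T" "b \<in> nodes T" unfolding a_def b_def using pF(1) xN by blast+
      have lab: "lex T a b" unfolding a_def b_def using pF(4) xN xx by blast
      have i1: "\<not> tle T a b" unfolding a_def b_def using inj_incomp[OF oS oT iF assms(6) xN(3) xx(1)] .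
      have i2: "\<not> tle T b a" unfolding a_def b_def using inj_incomp[OF oS oT iF xN(3) assms(6) not_sym[OF xx(1)]] .
      obtain M \<alpha>0 \<beta> where w: "immsucc T M \<alpha>0" "immsucc T M \<beta>" "\<alpha>0 \<noteq> \<beta>" "sibl T \<alpha>0 \<beta>" "tle T \<alpha>0 a" "tle T \<beta> b"
        using T.lex_iff[OF abN] lab i1 unfolding T.lexw_def by blast
      have Mab: "meet T a b = M" using T.wit_meet(1)[OF w(1,2,3,5,6) abN] .
      note Mn = T.imm_nodes[OF w(1)] and Bn = T.imm_nodes[OF w(2)]
      have Mb: "tlt T M b"
      proof -
        have "tle T M b" using T.t_trans[of M \<beta> b] Mn Bn w abN by blast
        moreover have "M \<noteq> b"
        proof
          assume "M = b"
          hence "tle T b a" using T.t_trans[of M \<alpha>0 a] Mn w abN by blast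
          thus False using i2 by blast
        qed
        ultimately show ?thesis unfolding tlt_def by blast
      qed
      define PT where "PT u = (\<exists>\<alpha>. immsucc T M \<alpha> \<and> \<alpha> \<noteq> \<beta> \<and> sibl T \<alpha> \<beta> \<and> tle T \<alpha> u)" for u
      have CT: "(lexlt T u b \<and> meet T a b = meet T u b) \<longleftrightarrow> PT u" if "leaf T u" for u
        using T.set_char[OF that abN(2) Mn[THEN conjunct1] Mb w(2) w(6)] Mab unfolding PT_def by metis
      have hy2: "lexlt T y b \<and> meet T a b = meet T y b" using hy unfolding a_def b_def by blast
      have "PT y" using CT[OF yleaf] hy2 by blast
      then obtain \<alpha>y where ay: "immsucc T M \<alpha>y" "\<alpha>y \<noteq> \<beta>" "sibl T \<alpha>y \<beta>" "tle T \<alpha>y y" unfolding PT_def by blast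
      have ymax: "\<And>u. leaf T u \<Longrightarrow> PT u \<Longrightarrow> lex T u y"
      proof -
        fix u assume u: "leaf T u" "PT u"
        hence "lexlt T u b \<and> meet T a b = meet T u b" using CT[OF u(1)] by blast
        thus "lex T u y" using hy(4) u(1) unfolding a_def b_def by blast
      qed
      have My: "tle T M y" using T.t_trans[of M \<alpha>y y] T.imm_nodes[OF ay(1)] ay yN by blast
      obtain wl where wl: "leaf T wl" "tle T \<beta> wl" using T.leaf_above Bn by blast
      have wlN: "wl \<in> nodes T" using wl T.leaf_node by blast
      have ywl: "lexlt T y wl" using T.wit_lex[OF ay(1) w(2) ay(2,3,4) wl(2) yN wlN] .
      have "\<not> maxleaf T y"
      proof
        assume "maxleaf T y"
        hence "lex T wl y" using wl unfolding maxleaf_def by blast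
        thus False using ywl T.lex_antisym yN wlN unfolding lexlt_def by blast
      qed
      then obtain y' where y': "nextleaf T y y'" using nextleaf_ex[OF oT yleaf] by blast
      have y'l: "leaf T y'" "lexlt T y y'" "\<And>u. leaf T u \<Longrightarrow> lexlt T y u \<Longrightarrow> lex T y' u"
        using y' unfolding nextleaf_def by blast+
      have y'N: "y' \<in> nodes T" using y'l T.leaf_node by blast
      have K1: "tle T \<beta> y'"
      proof (rule ccontr)
        assume nb: "\<not> tle T \<beta> y'"
        have "lex T y' wl" using y'l(3)[OF wl(1) ywl] .
        moreover have "y' \<noteq> wl" using nb wl by blast
        ultimately have "T.lexw y' wl" "\<not> tle T y' wl"
          using T.lex_iff[OF y'N wlN] T.leaf_le[OF y'l(1) wlN] by blast+
        then obtain m c d where cd: "immsucc T m c" "immsucc T m d" "c \<noteq> d" "sibl T c d" "tle T c y'" "tle T d wl"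
          unfolding T.lexw_def by blast
        note cn = T.imm_nodes[OF cd(1)] and dn = T.imm_nodes[OF cd(2)]
        have mwl: "tle T m wl" using T.t_trans[of m d wl] cd dn wlN by blast
        have "tle T \<beta> m \<or> tle T m \<beta>" using T.t_chain[of wl \<beta> m] wl wlN Bn cn mwl by blast
        moreover
        { assume "tle T \<beta> m"
          hence "tle T \<beta> y'" using T.t_trans[of \<beta> m c] T.t_trans[of \<beta> c y'] Bn cn cd y'N by blast
          hence False using nb by blast }
        moreover
        { assume mb: "tle T m \<beta>" "\<not> tle T \<beta> m"
          hence mbt: "tlt T m \<beta>" unfolding tlt_def using T.t_refl Bn by blast
          have db: "tle T d \<beta>" using T.child_under[OF cd(2) _ wlN mbt cd(6) wl(2)] Bn by blast
          have "tle T m M \<or> tle T M m" using T.t_chain[of \<beta> m M] mb Bn cn Mn by blast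
          moreover
          { assume "m = M"
            hence "d = \<beta>" using T.imm_eq_under[of M d \<beta> \<beta>] cd w(2) db Bn T.t_refl by blast
            hence "PT y'" unfolding PT_def using cd \<open>m = M\<close> by blast
            hence "lex T y' y" using ymax y'l(1) by blast
            hence False using y'l(2) T.lex_antisym yN y'N unfolding lexlt_def by blast }
          moreover
          { assume "tle T m M" "m \<noteq> M"
            hence "tlt T m M" unfolding tlt_def by blast
            hence "tle T d M" using T.child_under[OF cd(2) _ _ _ db] Mn Bn by blast
            hence "tle T d y" using T.t_trans[of d M y] dn Mn yN My by blast
            hence "lexlt T y' y" using T.wit_lex[OF cd(1,2,3,4,5) _ y'N yN] by blast
            hence False using y'l(2) T.lex_antisym yN y'N unfolding lexlt_def by blast }
          moreover
          { assume "tle T M m" "m \<noteq> M"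
            hence "tlt T M m" unfolding tlt_def by blast
            hence "m = \<beta>" using T.imm_L[OF w(2) _ _ mb(1)] cn by blast
            hence False using mb(2) T.t_refl Bn by blast }
          ultimately have False by blast }
        ultimately show False by blast
      qed
      have K2: "meet T y y' = M" using T.wit_meet(1)[OF ay(1) w(2) ay(2) ay(4) K1 yN y'N] .
      have hzc: "leaf V z" "lexlt V z (G y')" "meet V (G y) (G y') = meet V z (G y')"
        "\<forall>u. leaf V u \<and> lexlt V u (G y') \<and> meet V (G y) (G y') = meet V u (G y') \<longrightarrow> lex V u z"
        using conj_next[OF oT yleaf y', of V G z, THEN iffD1, OF hz] by blast+
      have hz'c0: "leaf V z'" "lexlt V z' (H x')" "meet V (H x) (H x') = meet V z' (H x')"
        "\<forall>u. leaf V u \<and> lexlt V u (H x') \<and> meet V (H x) (H x') = meet V u (H x') \<longrightarrow> lex V u z'"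
        using conj_next[OF oS assms(6) x', of V H z', THEN iffD1, OF hz'] by blast+
      have Hx: "H x = G a" "H x' = G b" using eqH xN unfolding a_def b_def by blast+
      have hz'c: "leaf V z'" "lexlt V z' (G b)" "meet V (G a) (G b) = meet V z' (G b)"
        "\<forall>u. leaf V u \<and> lexlt V u (G b) \<and> meet V (G a) (G b) = meet V u (G b) \<longrightarrow> lex V u z'"
        using hz'c0 unfolding Hx by blast+
      define N where "N = G M"
      have NN: "N \<in> nodes V" unfolding N_def using pG(1) Mn by blast
      have GyN: "G y \<in> nodes V" "G y' \<in> nodes V" "G a \<in> nodes V" "G b \<in> nodes V" "G \<beta> \<in> nodes V"
        using pG(1) yN y'N abN Bn by blast+
      have m1: "meet V (G y) (G y') = N" unfolding N_def using pG(3)[OF yN y'N] K2 by simp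
      have m2: "meet V (G a) (G b) = N" unfolding N_def using pG(3)[OF abN] Mab by simp
      have tltG: "tlt V N (G p)" if "p \<in> nodes T" "tlt T M p" for p
      proof -
        have "tle V N (G p)" unfolding N_def using inj_tle[OF T.tr_axioms V.tr_axioms iG _ that(1)] Mn that(2)
          unfolding tlt_def by blast
        moreover have "N \<noteq> G p" unfolding N_def using pG(6)[OF _ that(1)] Mn that(2) unfolding tlt_def by blast
        ultimately show ?thesis unfolding tlt_def by blast
      qed
      have Mb2: "tlt T M \<beta>" using Bn unfolding tlt_def by blast
      have My': "tlt T M y'"
      proof -
        have "tle T M y'" using T.t_trans[of M \<beta> y'] Mn Bn y'N K1 by blast
        moreover have "M \<noteq> y'" using K1 Bn Mn T.t_antisym y'N by blast
        ultimately show ?thesis unfolding tlt_def by blast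
      qed
      have Nb: "tlt V N (G b)" using tltG abN Mb by blast
      have Ny': "tlt V N (G y')" using tltG y'N My' by blast
      have NB: "tlt V N (G \<beta>)" using tltG Bn Mb2 by blast
      have Gbb: "tle V (G \<beta>) (G b)" using inj_tle[OF T.tr_axioms V.tr_axioms iG _ abN(2) w(6)] Bn by blast
      have Gby: "tle V (G \<beta>) (G y')" using inj_tle[OF T.tr_axioms V.tr_axioms iG _ y'N K1] Bn by blast
      obtain B where B: "immsucc V N B" "tle V B (G b)" using V.ct_ex[OF NN GyN(4) Nb] by blast
      obtain B' where B': "immsucc V N B'" "tle V B' (G y')" using V.ct_ex[OF NN GyN(2) Ny'] by blast
      have BB: "tle V B (G \<beta>)" using V.child_under[OF B(1) GyN(5) GyN(4) NB B(2) Gbb] .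
      have BB': "tle V B' (G \<beta>)" using V.child_under[OF B'(1) GyN(5) GyN(2) NB B'(2) Gby] .
      have "B' = B" using V.imm_eq_under[OF B'(1) B(1) GyN(5) BB' BB] .
      hence B'': "immsucc V N B" "tle V B (G y')" using B' by simp_all
      define PV where "PV u = (\<exists>\<alpha>. immsucc V N \<alpha> \<and> \<alpha> \<noteq> B \<and> sibl V \<alpha> B \<and> tle V \<alpha> u)" for u
      have CV1: "(lexlt V u (G y') \<and> meet V (G y) (G y') = meet V u (G y')) \<longleftrightarrow> PV u" if "leaf V u" for u
        using V.set_char[OF that GyN(2) NN Ny' B''] m1 unfolding PV_def by metis
      have CV2: "(lexlt V u (G b) \<and> meet V (G a) (G b) = meet V u (G b)) \<longleftrightarrow> PV u" if "leaf V u" for u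
        using V.set_char[OF that GyN(4) NN Nb B] m2 unfolding PV_def by metis
      have zN: "z \<in> nodes V" "z' \<in> nodes V" using hzc(1) hz'c(1) V.leaf_node by blast+
      have Pz: "PV z" using CV1[OF hzc(1)] hzc(2,3) by blast
      have Pz': "PV z'" using CV2[OF hz'c(1)] hz'c(2,3) by blast
      have "lex V z' z" using hzc(4) CV1[OF hz'c(1)] Pz' hz'c(1) by blast
      moreover have "lex V z z'" using hz'c(4) CV2[OF hzc(1)] Pz hzc(1) by blast
      ultimately have zz: "z = z'" using V.lex_antisym zN by blast
      have PB: "\<forall>wv\<in>nodes V. lex V wv z \<longrightarrow> lex T (g wv) y"
      proof (intro ballI impI)
        fix wv assume wv: "wv \<in> nodes V" "lex V wv z"
        define v where "v = g wv"
        have vN: "v \<in> nodes T" unfolding v_def using gN wv by blast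
        show "lex T (g wv) y"
        proof (rule ccontr)
          assume nl: "\<not> lex T (g wv) y"
          have nvy: "\<not> lex T v y" using nl unfolding v_def .
          have "lex T y v" using T.lex_total[OF yN vN] nvy by blast
          have bv: "lex T \<beta> v"
          proof (rule ccontr)
            assume nbv: "\<not> lex T \<beta> v"
            hence "lex T v \<beta>" using T.lex_total vN Bn by blast
            hence "T.lexw v \<beta>" using T.lex_iff vN Bn by blast
            then consider (le) "tle T v \<beta>" | (wt) p c d where "immsucc T p c" "immsucc T p d" "c \<noteq> d" "sibl T c d"
                "tle T c v" "tle T d \<beta>"
              unfolding T.lexw_def by blast
            thus False
            proof cases
              case le
              have "v \<noteq> \<beta>" using nbv T.lex_refl Bn by blast
              hence "tle T v M" using T.imm_below[OF w(2) vN le] by blast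
              hence "tle T v y" using T.t_trans[of v M y] vN Mn yN My by blast
              thus False using nvy T.le_lex by blast
            next
              case wt
              note cn = T.imm_nodes[OF wt(1)] and dn = T.imm_nodes[OF wt(2)]
              have pb: "tle T p \<beta>" using T.t_trans[of p d \<beta>] dn Bn wt by blast
              have "tle T p M \<or> tle T M p" using T.t_chain[of \<beta> p M] pb Bn cn Mn by blast
              moreover
              { assume "p = M"
                hence "d = \<beta>" using T.imm_eq_under[of M d \<beta> \<beta>] wt w(2) Bn T.t_refl by blast
                obtain l where l: "leaf T l" "tle T v l" using T.leaf_above vN by blast
                have lN: "l \<in> nodes T" using l T.leaf_node by blast
                have "tle T c l" using T.t_trans[of c v l] cn vN lN wt l by blast
                hence "PT l" unfolding PT_def using wt \<open>p = M\<close> \<open>d = \<beta>\<close> by blast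
                hence "lex T l y" using ymax l by blast
                hence "lex T v y" using T.lex_trans[of v l y] T.le_lex[OF l(2)] vN lN yN by blast
                hence False using nvy by blast }
              moreover
              { assume "tle T p M" "p \<noteq> M"
                hence "tlt T p M" unfolding tlt_def by blast
                hence "tle T d M" using T.child_under[OF wt(2) _ _ _ wt(6)] Mn Bn by blast
                hence "tle T d y" using T.t_trans[of d M y] dn Mn yN My by blast
                hence "lexlt T v y" using T.wit_lex[OF wt(1,2,3,4,5) _ vN yN] by blast
                hence False using nvy unfolding lexlt_def by blast }
              moreover
              { assume "tle T M p" "p \<noteq> M"
                hence "tlt T M p" unfolding tlt_def by blast
                hence "p = \<beta>" using T.imm_L[OF w(2) _ _ pb] cn by blast
                hence "d = \<beta>" using wt(6) dn Bn T.t_antisym by blast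
                hence False using dn \<open>p = \<beta>\<close> by blast }
              ultimately show False by blast
            qed
          qed
          have "lex V (G \<beta>) (G v)" using pG(4)[OF Bn[THEN conjunct2, THEN conjunct1] vN bv] .
          moreover have "tle V (G v) wv" unfolding v_def using pG(5) wv by blast
          ultimately have "lex V (G \<beta>) wv" using V.lex_trans[of "G \<beta>" "G v" wv] V.le_lex GyN(5) pG(1) vN wv by blast
          moreover obtain \<alpha>z where az: "immsucc V N \<alpha>z" "\<alpha>z \<noteq> B" "sibl V \<alpha>z B" "tle V \<alpha>z z" using Pz unfolding PV_def by blast
          have "lexlt V z (G \<beta>)" using V.wit_lex[OF az(1) B(1) az(2,3,4) BB zN(1) GyN(5)] .
          ultimately have "lex V z wv" using V.lex_trans[of z "G \<beta>" wv] zN GyN(5) wv unfolding lexlt_def by blast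
          hence "z = wv" using wv V.lex_antisym zN by blast
          hence "lex V (G \<beta>) z" using \<open>lex V (G \<beta>) wv\<close> by simp
          thus False using \<open>lexlt V z (G \<beta>)\<close> V.lex_antisym zN GyN(5) unfolding lexlt_def by blast
        qed
      qed
      show ?thesis using zz PB by blast
    qed
  qed
  show ?thesis
  proof (intro conjI allI impI)
    show "\<exists>z. f_conj V T g z y" by (rule P1)
    show "\<exists>z'. f_conj V S (f \<circ> g) z' x" by (rule P2)
    fix z z' assume h: "f_conj V T g z y" "f_conj V S (f \<circ> g) z' x"
    note p = P3[OF h]
    show "down V z = down V z'" using p by simp
    show "g ` down V z \<subseteq> down T y" using p gN unfolding down_def by blast
    show "\<forall>w\<in>down V z. f (g w) = (f \<circ> g) w" by simp
  qed
qed

end
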